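(* Let $q=p^m$ with $p$ prime, let $3\le k\le n\le q$, let $\alpha=(\alpha_1,\dots,\alpha_n)\in\mathbb{F}_q^n$ have pairwise distinct entries, let $v=(v_1,\dots,v_n)\in(\mathbb{F}_q^* )^n$, $\eta\in\mathbb{F}_q^*$ and $\delta\in\mathbb{F}_q$. Let $\mathcal{C}$ and $\mathcal{C}_1$ be the codes defined in the context. Define $\mathbf{t}=(t_1,\dots,t_{n+2})\in\mathbb{F}_q^{n+2}$ by $t_i=v_i^{-1}u_i\alpha_i^{\,n+2-k}$ for $1\le i\le n$, where $u_i=\prod_{j\ne i}(\alpha_i-\alpha_j)^{-1}$; $t_{n+1}=\delta-S_2-\eta S_5$; and $t_{n+2}=S_1$, where, with all $\sigma_r=\sigma_r([n])$, $S_1=\sigma_1$, $S_2=\sigma_1^2-\sigma_2$, and $S_5=-(\sigma_3\sigma_1^2+\sigma_5-\sigma_3\sigma_2-\sigma_4\sigma_1)+\sigma_2(\sigma_1^3+\sigma_3-2\sigma_2\sigma_1)+\sigma_1(\sigma_2\sigma_1^2+\sigma_4-\sigma_2^2-\sigma_3\sigma_1)-\sigma_1^2(\sigma_1^3+\sigma_3-2\sigma_2\sigma_1)$. Then $\mathcal{C}=\overline{\mathcal{C}_1}(\mathbf{t})$, i.e. $\mathcal{C}=\{(c_1,\dots,c_{n+2},\sum_{i=1}^{n+2}t_ic_i):(c_1,\dots,c_{n+2})\in\mathcal{C}_1\}$.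
   Context: For a finite set $I\subseteq[n]=\{1,\dots,n\}$ and $r\ge1$, $\sigma_r(I)=(-1)^r\sum_{i_1<\dots<i_r\in I}\alpha_{i_1}\cdots\alpha_{i_r}$ (with $\sigma_r(I)=0$ if $r>|I|$). Let $\mathcal{S}=\{f(x)=\sum_{i=0}^{k-1}f_ix^i+\eta f_{k-1}x^{k+2}: f_i\in\mathbb{F}_q\}$. The code $\mathcal{C}\subseteq\mathbb{F}_q^{n+3}$ is $\mathcal{C}=\{(v_1f(\alpha_1),\dots,v_nf(\alpha_n),f_{k-1},f_{k-2},f_{k-3}+\delta f_{k-1}): f\in\mathcal{S}\}$, where $f_j$ is the coefficient of $x^j$ in $f$ for $j\le k-1$. The code $\mathcal{C}_1\subseteq\mathbb{F}_q^{n+2}$ is obtained from $\mathcal{C}$ by deleting the last coordinate, i.e. $\mathcal{C}_1=\{(v_1f(\alpha_1),\dots,v_nf(\alpha_n),f_{k-1},f_{k-2}):f\in\mathcal{S}\}$. *)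

theory Defs
  imports "HOL-Computational_Algebra.Polynomial" "HOL-Computational_Algebra.Primes"
begin

definition sigma :: "(nat \<Rightarrow> 'a::comm_ring_1) \<Rightarrow> nat \<Rightarrow> nat set \<Rightarrow> 'a" where
  "sigma \<alpha> r I = (-1)^r * (\<Sum>J\<in>{J. J \<subseteq> I \<and> card J = r}. \<Prod>j\<in>J. \<alpha> j)"

definition polyS :: "nat \<Rightarrow> 'a::field \<Rightarrow> 'a poly set" where
  "polyS k \<eta> = {f. \<exists>c::nat \<Rightarrow> 'a.
      f = (\<Sum>i<k. monom (c i) i) + monom (\<eta> * c (k - 1)) (k + 2)}"

text \<open>The code C (length n+3), coordinates as lists; alpha, v indexed from 1.\<close>
definition codeC :: "nat \<Rightarrow> nat \<Rightarrow> (nat \<Rightarrow> 'a::field) \<Rightarrow> (nat \<Rightarrow> 'a) \<Rightarrow> 'a \<Rightarrow> 'a \<Rightarrow> 'a list set" where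
  "codeC n k \<alpha> v \<eta> \<delta> = (\<lambda>f. map (\<lambda>i. v i * poly f (\<alpha> i)) [1..<n+1]
        @ [coeff f (k - 1), coeff f (k - 2), coeff f (k - 3) + \<delta> * coeff f (k - 1)]) ` polyS k \<eta>"

definition codeC1 :: "nat \<Rightarrow> nat \<Rightarrow> (nat \<Rightarrow> 'a::field) \<Rightarrow> (nat \<Rightarrow> 'a) \<Rightarrow> 'a \<Rightarrow> 'a list set" where
  "codeC1 n k \<alpha> v \<eta> = (\<lambda>f. map (\<lambda>i. v i * poly f (\<alpha> i)) [1..<n+1]
        @ [coeff f (k - 1), coeff f (k - 2)]) ` polyS k \<eta>"

definition extend_code :: "'a::comm_ring_1 list set \<Rightarrow> (nat \<Rightarrow> 'a) \<Rightarrow> 'a list set" where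
  "extend_code D t = (\<lambda>c. c @ [\<Sum>i=1..length c. t i * c ! (i - 1)]) ` D"

end

theory Submission
  imports Defs
begin

lemma sigma_0: assumes "finite A" shows "sigma \<alpha> 0 A = 1"
proof -
  have "{J. J \<subseteq> A \<and> card J = 0} = {{}}"
    using assms by (auto simp: card_eq_0_iff intro: finite_subset) 
  then show ?thesis unfolding sigma_def by simp
qed

lemma lagrange_power_sum:
  fixes \<alpha> :: "nat \<Rightarrow> 'a::field"
  assumes fin: "finite A" and inj: "inj_on \<alpha> A" and cA: "card A = n" and n1: "n \<ge> 1" and jn: "j < n"
  shows "(\<Sum>i\<in>A. (\<Prod>l\<in>A-{i}. inverse (\<alpha> i - \<alpha> l)) * \<alpha> i ^ j) = (if j = n - 1 then 1 else 0)"
proof -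
  define u where "u i = (\<Prod>l\<in>A-{i}. inverse (\<alpha> i - \<alpha> l))" for i
  define L where "L i = (\<Prod>l\<in>A-{i}. [:- \<alpha> l, 1:])" for i
  have degL: "degree (L i) = n - 1" and lcL: "coeff (L i) (n - 1) = 1" if "i \<in> A" for i
  proof -
    have c: "card (A - {i}) = n - 1" using that fin cA by simp
    have "degree (L i) = (\<Sum>l\<in>A-{i}. degree [:- \<alpha> l, 1:])"
      unfolding L_def by (rule degree_prod_eq_sum_degree) auto
    also have "\<dots> = n - 1" using c by simp
    finally show "degree (L i) = n - 1" .
    have "lead_coeff (L i) = 1" unfolding L_def lead_coeff_prod by simp
    then show "coeff (L i) (n - 1) = 1" using \<open>degree (L i) = n - 1\<close> by simp
  qed
  have polyL: "u i * poly (L i) (\<alpha> l) = (if l = i then 1 else 0)" if "i \<in> A" "l \<in> A" for i l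
  proof (cases "l = i")
    case True
    have "u i * poly (L i) (\<alpha> l) = (\<Prod>m\<in>A-{i}. inverse (\<alpha> i - \<alpha> m) * (\<alpha> i - \<alpha> m))"
      unfolding u_def L_def True poly_prod by (simp add: prod.distrib)
    also have "\<dots> = 1"
    proof (rule prod.neutral, rule ballI)
      fix m assume "m \<in> A - {i}"
      then have "\<alpha> i \<noteq> \<alpha> m" using inj that by (auto simp: inj_on_def)
      then show "inverse (\<alpha> i - \<alpha> m) * (\<alpha> i - \<alpha> m) = 1" by simp
    qed
    finally show ?thesis using True by simp
  next
    case False
    have "poly (L i) (\<alpha> l) = (\<Prod>m\<in>A-{i}. \<alpha> l - \<alpha> m)" unfolding L_def poly_prod by simp
    also have "\<dots> = 0" using False that fin by (intro prod_zero) auto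
    finally show ?thesis using False by simp
  qed
  define Q where "Q = (\<Sum>i\<in>A. smult (u i * \<alpha> i ^ j) (L i))"
  define D where "D = monom 1 j - Q"
  have degQ: "degree Q \<le> n - 1" unfolding Q_def
    by (rule degree_sum_le) (use fin in \<open>auto intro: order.trans[OF degree_smult_le] simp: degL\<close>)
  have degD: "degree D < n" unfolding D_def
    using degQ jn n1 degree_diff_le[of "monom 1 j" "n - 1" Q] by (simp add: degree_monom_eq, linarith)
  have rootD: "poly D (\<alpha> l) = 0" if "l \<in> A" for l
  proof -
    have "poly Q (\<alpha> l) = (\<Sum>i\<in>A. \<alpha> i ^ j * (u i * poly (L i) (\<alpha> l)))"
      unfolding Q_def poly_sum by (simp add: mult_ac)
    also have "\<dots> = (\<Sum>i\<in>A. if i = l then \<alpha> i ^ j else 0)"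
      by (rule sum.cong) (use that polyL in auto)
    also have "\<dots> = \<alpha> l ^ j" using fin that by simp
    finally show ?thesis unfolding D_def by (simp add: poly_monom)
  qed
  have "D = 0"
  proof (rule ccontr)
    assume "D \<noteq> 0"
    then have "card {x. poly D x = 0} \<le> degree D" by (rule card_poly_roots_bound)
    moreover have "\<alpha> ` A \<subseteq> {x. poly D x = 0}" using rootD by auto
    then have "card (\<alpha> ` A) \<le> card {x. poly D x = 0}"
      using poly_roots_finite[OF \<open>D \<noteq> 0\<close>] by (intro card_mono) auto
    moreover have "card (\<alpha> ` A) = n" using card_image[OF inj] cA by simp
    ultimately show False using degD by simp
  qed
  then have "coeff (monom 1 j) (n - 1) = coeff Q (n - 1)" unfolding D_def by simp
  moreover have "coeff Q (n - 1) = (\<Sum>i\<in>A. u i * \<alpha> i ^ j)"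
    unfolding Q_def coeff_sum by (rule sum.cong) (use lcL in auto)
  ultimately show ?thesis unfolding u_def by (simp add: coeff_monom)
qed

lemma sigma_big:
  assumes "finite A" "r > card A" shows "sigma \<alpha> r A = 0"
proof -
  have e: "{J. J \<subseteq> A \<and> card J = r} = {}"
    using assms by (auto dest!: card_mono[OF assms(1)])
  show ?thesis unfolding sigma_def e by simp
qed

lemma prod_linear_expand:
  fixes \<alpha> :: "nat \<Rightarrow> 'a::comm_ring_1"
  assumes fin: "finite A"
  shows "(\<Prod>i\<in>A. x - \<alpha> i) = (\<Sum>r\<le>card A. sigma \<alpha> r A * x^(card A - r))"
proof -
  have "(\<Prod>i\<in>A. x - \<alpha> i) = (\<Prod>i\<in>A. (- \<alpha> i) + x)" by simp
  also have "\<dots> = (\<Sum>B\<in>Pow A. (\<Prod>i\<in>B. - \<alpha> i) * (\<Prod>i\<in>A - B. x))"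
    by (rule prod_add[OF fin])
  also have "\<dots> = (\<Sum>B\<in>Pow A. (-1)^card B * (\<Prod>i\<in>B. \<alpha> i) * x^(card A - card B))"
  proof (rule sum.cong[OF refl])
    fix B assume "B \<in> Pow A"
    then have "B \<subseteq> A" by auto
    then have "card (A - B) = card A - card B" using fin by (meson card_Diff_subset finite_subset)
    then show "(\<Prod>i\<in>B. - \<alpha> i) * (\<Prod>i\<in>A - B. x) = (-1)^card B * (\<Prod>i\<in>B. \<alpha> i) * x^(card A - card B)"
      by (simp add: prod_uminus)
  qed
  also have "\<dots> = (\<Sum>r\<le>card A. \<Sum>B\<in>{B. B \<in> Pow A \<and> card B = r}. (-1)^card B * (\<Prod>i\<in>B. \<alpha> i) * x^(card A - card B))"
    by (rule sum.group[symmetric]) (use fin card_mono in auto)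
  also have "\<dots> = (\<Sum>r\<le>card A. sigma \<alpha> r A * x^(card A - r))"
  proof (rule sum.cong[OF refl])
    fix r
    have "(\<Sum>B\<in>{B. B \<in> Pow A \<and> card B = r}. (-1)^card B * (\<Prod>i\<in>B. \<alpha> i) * x^(card A - card B))
       = (\<Sum>B\<in>{J. J \<subseteq> A \<and> card J = r}. (-1)^r * (\<Prod>i\<in>B. \<alpha> i) * x^(card A - r))"
      by (rule sum.cong) auto
    also have "\<dots> = sigma \<alpha> r A * x^(card A - r)"
      unfolding sigma_def by (simp add: sum_distrib_left sum_distrib_right mult.assoc)
    finally show "(\<Sum>B\<in>{B. B \<in> Pow A \<and> card B = r}. (-1)^card B * (\<Prod>i\<in>B. \<alpha> i) * x^(card A - card B)) = sigma \<alpha> r A * x^(card A - r)" .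
  qed
  finally show ?thesis .
qed

lemma recurrence:
  fixes \<alpha> :: "nat \<Rightarrow> 'a::field"
  assumes fin: "finite A" and inj: "inj_on \<alpha> A" and cA: "card A = n" and n1: "n \<ge> 1" and m1: "m \<ge> 1"
  defines "p \<equiv> (\<lambda>j. (\<Sum>i\<in>A. (\<Prod>l\<in>A-{i}. inverse (\<alpha> i - \<alpha> l)) * \<alpha> i ^ j))"
  shows "(\<Sum>r\<le>m. sigma \<alpha> r A * p (n - 1 + (m - r))) = 0"
proof -
  define u where "u i = (\<Prod>l\<in>A-{i}. inverse (\<alpha> i - \<alpha> l))" for i
  define s where "s r = sigma \<alpha> r A" for r
  have P0: "p j = 0" if "j < n - 1" for j
    using lagrange_power_sum[OF fin inj cA n1, of j] that unfolding p_def by simp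
  have sbig: "s r = 0" if "r > n" for r using sigma_big[OF fin] that cA unfolding s_def by simp
  define g where "g r = s r * p ((m - 1) + (n - r))" for r
  have "(\<Sum>r\<le>n. g r) = (\<Sum>r\<le>n. \<Sum>i\<in>A. u i * \<alpha> i ^ (m - 1) * (s r * \<alpha> i ^ (n - r)))"
    unfolding g_def p_def u_def[symmetric] power_add by (simp add: sum_distrib_left mult_ac)
  also have "\<dots> = (\<Sum>i\<in>A. \<Sum>r\<le>n. u i * \<alpha> i ^ (m - 1) * (s r * \<alpha> i ^ (n - r)))"
    by (rule sum.swap)
  also have "\<dots> = (\<Sum>i\<in>A. u i * \<alpha> i ^ (m - 1) * (\<Sum>r\<le>n. s r * \<alpha> i ^ (n - r)))"
    by (simp add: sum_distrib_left)
  also have "\<dots> = (\<Sum>i\<in>A. u i * \<alpha> i ^ (m - 1) * (\<Prod>l\<in>A. \<alpha> i - \<alpha> l))"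
    using prod_linear_expand[OF fin, of "\<alpha> _" \<alpha>] cA unfolding s_def by simp
  also have "\<dots> = 0"
    by (rule sum.neutral) (use fin in \<open>auto intro: prod_zero\<close>)
  finally have g0: "(\<Sum>r\<le>n. g r) = 0" .
  have "(\<Sum>r\<le>n. g r) = (\<Sum>r\<le>n+m. g r)"
    by (rule sum.mono_neutral_left) (auto simp: g_def sbig)
  also have "\<dots> = (\<Sum>r\<le>m. g r)"
  proof (rule sum.mono_neutral_right)
    show "\<forall>r\<in>{..n + m} - {..m}. g r = 0"
    proof
      fix r assume r: "r \<in> {..n + m} - {..m}"
      show "g r = 0"
      proof (cases "r > n")
        case True then show ?thesis by (simp add: g_def sbig)
      next
        case False then show ?thesis using r m1 by (auto simp: g_def intro!: P0)
      qed
    qed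
  qed auto
  also have "\<dots> = (\<Sum>r\<le>m. s r * p (n - 1 + (m - r)))"
  proof (rule sum.cong[OF refl])
    fix r assume "r \<in> {..m}"
    then show "g r = s r * p (n - 1 + (m - r))"
    proof (cases "r > n")
      case True then show ?thesis by (simp add: g_def sbig)
    next
      case False
      then have "m - 1 + (n - r) = n - 1 + (m - r)" using m1 n1 \<open>r \<in> {..m}\<close> by auto
      then show ?thesis unfolding g_def by simp
    qed
  qed
  finally show ?thesis using g0 unfolding s_def by simp
qed

lemma key:
  fixes n k :: nat and \<alpha> v :: "nat \<Rightarrow> 'a::field" and \<eta> \<delta> :: 'a and t :: "nat \<Rightarrow> 'a"
  assumes "3 \<le> k" and "k \<le> n"
    and inj: "inj_on \<alpha> {1..n}"
    and vnz: "\<forall>i\<in>{1..n}. v i \<noteq> 0"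
    and ti: "\<forall>i\<in>{1..n}. t i = inverse (v i)
            * (\<Prod>j\<in>{1..n} - {i}. inverse (\<alpha> i - \<alpha> j)) * \<alpha> i ^ (n + 2 - k)"
    and tn1: "t (n + 1) = (let s = (\<lambda>r. sigma \<alpha> r {1..n});
           S2 = s 1 ^ 2 - s 2;
           S5 = - (s 3 * s 1 ^ 2 + s 5 - s 3 * s 2 - s 4 * s 1)
                + s 2 * (s 1 ^ 3 + s 3 - 2 * s 2 * s 1)
                + s 1 * (s 2 * s 1 ^ 2 + s 4 - s 2 ^ 2 - s 3 * s 1)
                - s 1 ^ 2 * (s 1 ^ 3 + s 3 - 2 * s 2 * s 1)
         in \<delta> - S2 - \<eta> * S5)"
    and tn2: "t (n + 2) = sigma \<alpha> 1 {1..n}"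
    and fS: "f \<in> polyS k \<eta>"
  shows "coeff f (k - 3) + \<delta> * coeff f (k - 1) =
    (\<Sum>i=1..length (map (\<lambda>i. v i * poly f (\<alpha> i)) [1..<n+1] @ [coeff f (k - 1), coeff f (k - 2)]).
       t i * (map (\<lambda>i. v i * poly f (\<alpha> i)) [1..<n+1] @ [coeff f (k - 1), coeff f (k - 2)]) ! (i - 1))"
proof -
  define A where "A = {1..n}"
  have fin: "finite A" and cA: "card A = n" unfolding A_def by auto
  have n1: "n \<ge> 1" using assms by simp
  obtain K where kK: "k = K + 3" using \<open>3 \<le> k\<close> by (metis add.commute le_Suc_ex)
  obtain d where nd: "n = k + d" using \<open>k \<le> n\<close> by (metis le_Suc_ex)
  define u where "u i = (\<Prod>l\<in>A-{i}. inverse (\<alpha> i - \<alpha> l))" for i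
  define p where "p j = (\<Sum>i\<in>A. u i * \<alpha> i ^ j)" for j
  define s where "s r = sigma \<alpha> r A" for r
  define h where "h m = p (n - 1 + m)" for m
  have P0: "p j = 0" if "j < n - 1" for j
    using lagrange_power_sum[OF fin inj[folded A_def] cA n1, of j] that unfolding p_def u_def by simp
  have h0: "h 0 = 1"
    using lagrange_power_sum[OF fin inj[folded A_def] cA n1, of "n - 1"] n1 unfolding h_def p_def u_def by simp
  have rec: "(\<Sum>r\<le>m. s r * h (m - r)) = 0" if "m \<ge> 1" for m
    using recurrence[OF fin inj[folded A_def] cA n1 that] unfolding h_def p_def u_def s_def by simp
  have s0: "s 0 = 1" unfolding s_def using sigma_0[OF fin] .
  have e1: "s 0 * h 1 + s 1 * h 0 = 0" using rec[of 1] by (simp add: numeral_eq_Suc)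
  have e2: "s 0 * h 2 + s 1 * h 1 + s 2 * h 0 = 0" using rec[of 2] by (simp add: numeral_eq_Suc)
  have e3: "s 0 * h 3 + s 1 * h 2 + s 2 * h 1 + s 3 * h 0 = 0" using rec[of 3] by (simp add: numeral_eq_Suc)
  have e4: "s 0 * h 4 + s 1 * h 3 + s 2 * h 2 + s 3 * h 1 + s 4 * h 0 = 0" using rec[of 4] by (simp add: numeral_eq_Suc)
  have e5: "s 0 * h 5 + s 1 * h 4 + s 2 * h 3 + s 3 * h 2 + s 4 * h 1 + s 5 * h 0 = 0" using rec[of 5] by (simp add: numeral_eq_Suc)
  have H1: "h 1 = - s 1" using e1 s0 h0 by algebra
  have H2: "h 2 = s 1 ^ 2 - s 2" using e1 e2 s0 h0 by algebra
  have H5: "h 5 = - (s 3 * s 1 ^ 2 + s 5 - s 3 * s 2 - s 4 * s 1)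
                + s 2 * (s 1 ^ 3 + s 3 - 2 * s 2 * s 1)
                + s 1 * (s 2 * s 1 ^ 2 + s 4 - s 2 ^ 2 - s 3 * s 1)
                - s 1 ^ 2 * (s 1 ^ 3 + s 3 - 2 * s 2 * s 1)" using e1 e2 e3 e4 e5 s0 h0 by algebra
  obtain c where f: "f = (\<Sum>i<k. monom (c i) i) + monom (\<eta> * c (k - 1)) (k + 2)"
    using fS unfolding polyS_def by auto
  have cf: "coeff f j = c j" if "j < k" for j
    using that unfolding f by (simp add: coeff_sum coeff_monom)
  have polyf: "poly f x = (\<Sum>l<k. c l * x ^ l) + \<eta> * c (k - 1) * x ^ (k + 2)" for x
    unfolding f by (simp add: poly_sum poly_monom)
  define L where "L = map (\<lambda>i. v i * poly f (\<alpha> i)) [1..<n+1] @ [coeff f (k - 1), coeff f (k - 2)]"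
  have lenL: "length L = n + 2" unfolding L_def by simp
  have "{1..n+2} = insert (n+2) (insert (n+1) A)" unfolding A_def by auto
  then have "(\<Sum>i=1..n+2. t i * L ! (i - 1)) = (\<Sum>i\<in>A. t i * L ! (i - 1)) + t (n+1) * L ! n + t (n+2) * L ! (n+1)"
    using fin unfolding A_def by (simp add: algebra_simps)
  also have "(\<Sum>i\<in>A. t i * L ! (i - 1)) = (\<Sum>i\<in>A. u i * \<alpha> i ^ (n + 2 - k) * poly f (\<alpha> i))"
  proof (rule sum.cong[OF refl])
    fix i assume i: "i \<in> A"
    then have li: "i - 1 < length (map (\<lambda>i. v i * poly f (\<alpha> i)) [1..<n+1])" "1 + (i - 1) < n + 1" "1 + (i - 1) = i" "i - 1 < length [1..<n+1]"
      unfolding A_def by auto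
    have "L ! (i - 1) = v i * poly f (\<alpha> i)" unfolding L_def
      by (simp only: nth_append_left[OF li(1)] nth_map[OF li(4)] nth_upt[OF li(2)] li(3))
    moreover have "v i \<noteq> 0" using vnz i unfolding A_def by auto
    ultimately show "t i * L ! (i - 1) = u i * \<alpha> i ^ (n + 2 - k) * poly f (\<alpha> i)"
      using ti i unfolding A_def u_def by (simp add: field_simps)
  qed
  finally have sumL: "(\<Sum>i=1..n+2. t i * L ! (i - 1)) = (\<Sum>i\<in>A. u i * \<alpha> i ^ (n + 2 - k) * poly f (\<alpha> i)) + t (n+1) * L ! n + t (n+2) * L ! (n+1)" .
  have Ln: "L ! n = coeff f (k - 1)" "L ! (n+1) = coeff f (k - 2)" unfolding L_def by (simp_all add: nth_append)
  define e where "e = n + 2 - k"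
  have S: "(\<Sum>i\<in>A. u i * \<alpha> i ^ e * poly f (\<alpha> i)) = (\<Sum>l<k. c l * p (e + l)) + \<eta> * c (k - 1) * p (e + (k + 2))"
  proof -
    have "(\<Sum>i\<in>A. u i * \<alpha> i ^ e * poly f (\<alpha> i)) = (\<Sum>i\<in>A. (\<Sum>l<k. c l * (u i * \<alpha> i ^ (e + l))) + \<eta> * c (k - 1) * (u i * \<alpha> i ^ (e + (k + 2))))"
      by (rule sum.cong[OF refl]) (simp add: polyf sum_distrib_left distrib_left power_add mult_ac)
    also have "\<dots> = (\<Sum>i\<in>A. \<Sum>l<k. c l * (u i * \<alpha> i ^ (e + l))) + \<eta> * c (k - 1) * p (e + (k + 2))"
      by (simp add: sum.distrib p_def sum_distrib_left)
    also have "(\<Sum>i\<in>A. \<Sum>l<k. c l * (u i * \<alpha> i ^ (e + l))) = (\<Sum>l<k. c l * p (e + l))"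
      unfolding p_def sum_distrib_left by (rule sum.swap)
    finally show ?thesis .
  qed
  have ks: "k = Suc (Suc (Suc K))" using kK by simp
  have ee: "e = d + 2" "n - 1 = K + d + 2" "k - 1 = Suc (Suc K)" "k - 2 = Suc K" "k - 3 = K"
    unfolding e_def using nd kK by auto
  have Z: "(\<Sum>l<K. c l * p (e + l)) = 0"
    by (rule sum.neutral) (use nd kK in \<open>auto simp: e_def intro!: P0\<close>)
  have hh: "p (e + K) = h 0" "p (e + Suc K) = h 1" "p (e + Suc (Suc K)) = h 2" "p (e + (k + 2)) = h 5"
    unfolding h_def ee using kK by (simp_all add: algebra_simps)
  have split: "(\<Sum>l<k. c l * p (e + l)) = (\<Sum>l<K. c l * p (e + l)) + c K * p (e + K) + c (Suc K) * p (e + Suc K) + c (Suc (Suc K)) * p (e + Suc (Suc K))"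
    unfolding ks by (simp add: algebra_simps)
  have sA: "sigma \<alpha> r {1..n} = s r" for r unfolding s_def A_def ..
  have cK: "coeff f (k - 1) = c (Suc (Suc K))" "coeff f (k - 2) = c (Suc K)" "coeff f (k - 3) = c K"
    using cf[of "k - 1"] cf[of "k - 2"] cf[of "k - 3"] kK by (simp_all add: ee)
  have "(\<Sum>i=1..n+2. t i * L ! (i - 1)) = coeff f (k - 3) + \<delta> * coeff f (k - 1)"
    unfolding sumL Ln e_def[symmetric] S split Z hh cK tn1 tn2 Let_def sA h0 H1 H2 H5
    using ee by (simp add: algebra_simps power2_eq_square power3_eq_cube)
  then show ?thesis unfolding L_def[symmetric] lenL by simp
qed

theorem theorem1:
  fixes p m n k :: nat and \<alpha> v :: "nat \<Rightarrow> 'a::{finite,field}" and \<eta> \<delta> :: 'a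
    and t :: "nat \<Rightarrow> 'a"
  assumes "prime p" and "card (UNIV :: 'a set) = p ^ m"
    and "3 \<le> k" and "k \<le> n" and "n \<le> card (UNIV :: 'a set)"
    and "inj_on \<alpha> {1..n}"
    and "\<forall>i\<in>{1..n}. v i \<noteq> 0"
    and "\<eta> \<noteq> 0"
    and "\<forall>i\<in>{1..n}. t i = inverse (v i)
            * (\<Prod>j\<in>{1..n} - {i}. inverse (\<alpha> i - \<alpha> j)) * \<alpha> i ^ (n + 2 - k)"
    and "t (n + 1) = (let s = (\<lambda>r. sigma \<alpha> r {1..n});
           S2 = s 1 ^ 2 - s 2;
           S5 = - (s 3 * s 1 ^ 2 + s 5 - s 3 * s 2 - s 4 * s 1)
                + s 2 * (s 1 ^ 3 + s 3 - 2 * s 2 * s 1)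
                + s 1 * (s 2 * s 1 ^ 2 + s 4 - s 2 ^ 2 - s 3 * s 1)
                - s 1 ^ 2 * (s 1 ^ 3 + s 3 - 2 * s 2 * s 1)
         in \<delta> - S2 - \<eta> * S5)"
    and "t (n + 2) = sigma \<alpha> 1 {1..n}"
  shows "codeC n k \<alpha> v \<eta> \<delta> = extend_code (codeC1 n k \<alpha> v \<eta>) t"
  unfolding codeC_def codeC1_def extend_code_def image_image
  apply (rule image_cong[OF refl])
  subgoal for f
    using key[OF assms(3,4,6,7,9,10,11), of f]
    by (simp only: append_assoc append_Cons append_Nil)
  done

end
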